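(* Let $(S,d)$ be a metric space and let $P$ be a non-empty subset of $S$ with the induced metric. If $f\in\mathrm{BL}(P)$ and $c\in\mathbb{R}$ are such that $|f\vee c\mathbf{1}|_L=|f|_L$, then $$\mathcal{E}^{S,0}_P(f\vee c\mathbf{1})\vee c\mathbf{1}=\mathcal{E}^{S,0}_P(f)\vee c\mathbf{1}.$$
   Context: $\mathrm{BL}(P)$ is the space of bounded real-valued Lipschitz functions on $P$, $|f|_L=\sup_{x\neq y}|f(x)-f(y)|/d(x,y)$ (with $|f|_L=0$ on a singleton), $\vee$ is pointwise maximum, and $c\mathbf{1}$ denotes the constant function $c$ (on $P$ or on $S$ as appropriate). For $f\in\mathrm{BL}(P)$, $\mathcal{E}^{S,0}_P f(x)=\sup_{p\in P}[f(p)-|f|_L d(p,x)]$ for $x\in S$. *)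

theory Defs
  imports "HOL-Analysis.Analysis"
begin

definition lip_const :: "'a::metric_space set \<Rightarrow> ('a \<Rightarrow> real) \<Rightarrow> real" where
  "lip_const P f =
     (if \<exists>x\<in>P. \<exists>y\<in>P. x \<noteq> y
      then (SUP p \<in> {(x, y). x \<in> P \<and> y \<in> P \<and> x \<noteq> y}. \<bar>f (fst p) - f (snd p)\<bar> / dist (fst p) (snd p))
      else 0)"

definition BL :: "'a::metric_space set \<Rightarrow> ('a \<Rightarrow> real) set" where
  "BL P = {f. bounded (f ` P) \<and> (\<exists>L. L \<ge> 0 \<and> L-lipschitz_on P f)}"

definition ext0 :: "'a::metric_space set \<Rightarrow> ('a \<Rightarrow> real) \<Rightarrow> 'a \<Rightarrow> real" where
  "ext0 P f x = (SUP p \<in> P. f p - lip_const P f * dist p x)"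

end

theory Submission
  imports Defs
begin

lemma lip_nonneg:
  assumes "f \<in> BL P"
  shows "lip_const P f \<ge> 0"
proof (cases "\<exists>x\<in>P. \<exists>y\<in>P. x \<noteq> y")
  case True
  then obtain x y where xy: "x \<in> P" "y \<in> P" "x \<noteq> y" by blast
  from assms obtain K where K: "K-lipschitz_on P f" unfolding BL_def by blast
  let ?A = "{(x, y). x \<in> P \<and> y \<in> P \<and> x \<noteq> y}"
  have bdd: "bdd_above ((\<lambda>p. \<bar>f (fst p) - f (snd p)\<bar> / dist (fst p) (snd p)) ` ?A)"
  proof (rule bdd_aboveI2)
    fix p assume "p \<in> ?A"
    then have "dist (f (fst p)) (f (snd p)) \<le> K * dist (fst p) (snd p)" "dist (fst p) (snd p) > 0"
      using K by (auto simp: lipschitz_on_def)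
    then show "\<bar>f (fst p) - f (snd p)\<bar> / dist (fst p) (snd p) \<le> K"
      by (simp add: dist_real_def divide_le_eq)
  qed
  have "0 \<le> \<bar>f (fst (x,y)) - f (snd (x,y))\<bar> / dist (fst (x,y)) (snd (x,y))" by simp
  also have "\<dots> \<le> (SUP p \<in> ?A. \<bar>f (fst p) - f (snd p)\<bar> / dist (fst p) (snd p))"
    by (rule cSUP_upper[OF _ bdd]) (use xy in auto)
  finally show ?thesis using True unfolding lip_const_def by simp
qed (simp add: lip_const_def)

theorem corollary4p5:
  fixes P :: "'a::metric_space set" and f :: "'a \<Rightarrow> real" and c :: real
  assumes "P \<noteq> {}"
    and "f \<in> BL P"
    and "lip_const P (\<lambda>p. max (f p) c) = lip_const P f"
  shows "(\<lambda>x. max (ext0 P (\<lambda>p. max (f p) c) x) c) = (\<lambda>x. max (ext0 P f x) c)"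
proof
  fix x
  define L where "L = lip_const P f"
  have L0: "L \<ge> 0" unfolding L_def by (rule lip_nonneg[OF assms(2)])
  from assms(2) have "bounded (f ` P)" unfolding BL_def by blast
  then obtain B where B: "\<And>p. p \<in> P \<Longrightarrow> \<bar>f p\<bar> \<le> B"
    unfolding bounded_iff by auto
  have bf: "bdd_above ((\<lambda>p. f p - L * dist p x) ` P)"
  proof (rule bdd_aboveI2)
    fix p assume "p \<in> P"
    then show "f p - L * dist p x \<le> B" using B[of p] L0
      by (smt (verit) mult_nonneg_nonneg zero_le_dist)
  qed
  have bg: "bdd_above ((\<lambda>p. max (f p) c - L * dist p x) ` P)"
  proof (rule bdd_aboveI2)
    fix p assume "p \<in> P"
    then show "max (f p) c - L * dist p x \<le> max B c" using B[of p] L0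
      by (smt (verit) mult_nonneg_nonneg zero_le_dist)
  qed
  define Sf where "Sf = (SUP p \<in> P. f p - L * dist p x)"
  define Sg where "Sg = (SUP p \<in> P. max (f p) c - L * dist p x)"
  have "Sg \<le> max Sf c"
    unfolding Sg_def
  proof (rule cSUP_least[OF assms(1)])
    fix p assume p: "p \<in> P"
    have "f p - L * dist p x \<le> Sf" unfolding Sf_def by (rule cSUP_upper[OF p bf])
    moreover have "L * dist p x \<ge> 0" using L0 by simp
    ultimately show "max (f p) c - L * dist p x \<le> max Sf c" by linarith
  qed
  moreover have "Sf \<le> Sg"
    unfolding Sf_def
  proof (rule cSUP_least[OF assms(1)])
    fix p assume p: "p \<in> P"
    have "max (f p) c - L * dist p x \<le> Sg" unfolding Sg_def by (rule cSUP_upper[OF p bg])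
    then show "f p - L * dist p x \<le> Sg" by linarith
  qed
  ultimately have "max Sg c = max Sf c" by linarith
  then show "max (ext0 P (\<lambda>p. max (f p) c) x) c = max (ext0 P f x) c"
    unfolding ext0_def assms(3) Sf_def Sg_def L_def .
qed

end
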